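(* Let $\Pi$ be a VIC program and let $S_1,S_2$ be states of $\Pi$ that differ only in the choice of player $p$ (i.e. $S_1(p')=S_2(p')$ for $p'\neq p$ and $S_1(p)\neq S_2(p)$). Then for every player $\hat p$: (1) $u(S_1,\hat p,S_1(p))\ge u(S_2,\hat p,S_1(p))$; (2) $u(S_1,\hat p,S_2(p))\le u(S_2,\hat p,S_2(p))$; (3) for every $j\in Q\setminus\{S_1(p),S_2(p)\}$, $u(S_1,\hat p,j)=u(S_2,\hat p,j)$.
   Context: A cGAP $\Pi$ is a finite set of annotated rules $A_0:f(\mu_1,\dots,\mu_n)\leftarrow A_1:\mu_1,\dots,A_n:\mu_n$ (annotation functions $f$ fixed maps $[0,1]^n\to[0,1]$; atoms built from unary vertex and binary edge predicates over vertex constants) plus exactly one vertex choice (VC) rule $b_1(X),\dots,b_m(X)\hookleftarrow a_1(X),\dots,a_m(X)$. $\mathcal{MM}(P)$ denotes the unique minimal model (interpretations map ground atoms to $[0,1]$, ordered pointwise) of a GAP $P$. Each vertex $v$ is a player $\mathcal P_v$ with actions $Q=\{1,\dots,m\}$; a state is a map $S$ from players to $Q$; $\Pi_S$ is the ground GAP obtained from the grounding of $\Pi$ by replacing each ground VC-rule instance for vertex $v$ with $b_i(v):\mu\leftarrow a_i(v):\mu$ where $i=S(\mathcal P_v)$ and keeping all ground non-VC rules. The utility is $u(S,\mathcal P_v,i)=\mathcal{MM}(\Pi_S)(a_i(v))$. Dependency graph $\mathcal G(\Pi)$: vertices are the vertex predicate symbols; there is an edge $(p_2,p_1)$ iff $p_2$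 occurs in the body and $p_1$ in the head of some annotated rule, or $p_2=a_i$ and $p_1=b_i$ for some $i$ in the VC rule. $\Pi$ is a vertex independent choice (VIC) program iff (1) no predicate $b_j$ of the VC-rule head appears in the head of an annotated rule, and (2) for all $i\neq j$ there is no path in $\mathcal G(\Pi)$ from $b_j$ to $a_i$. *)

theory Defs
  imports Main "HOL.Real"
begin

datatype ('x, 'c) trm = Var 'x | Cst 'c

fun inst :: "('x \<Rightarrow> 'c) \<Rightarrow> ('x, 'c) trm \<Rightarrow> 'c" where
  "inst \<sigma> (Var x) = \<sigma> x"
| "inst \<sigma> (Cst c) = c"

datatype ('p, 'e, 't) atom = VAt 'p 't | EAt 'e 't 't

text \<open>An annotated rule  A0 : f(mu_1,...,mu_n) <- A1 : mu_1, ..., An : mu_n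
  is represented as (A0, f, [A1,...,An]).\<close>
type_synonym ('p, 'e, 't) arule = "('p, 'e, 't) atom \<times> (real list \<Rightarrow> real) \<times> ('p, 'e, 't) atom list"

text \<open>A cGAP: a set of annotated rules and one vertex choice rule
  b_1(X),...,b_m(X) <-' a_1(X),...,a_m(X)  given by m, a, b (indices 1..m).\<close>
record ('p, 'e, 'x, 'c) cgap =
  rules :: "('p, 'e, ('x, 'c) trm) arule set"
  nch :: nat
  ca :: "nat \<Rightarrow> 'p"
  cb :: "nat \<Rightarrow> 'p"

definition actions :: "('p, 'e, 'x, 'c) cgap \<Rightarrow> nat set" where
  "actions \<Pi> = {1..nch \<Pi>}"

definition is_cgap :: "('p, 'e, 'x, 'c) cgap \<Rightarrow> bool" where
  "is_cgap \<Pi> \<longleftrightarrow>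
     finite (UNIV :: 'c set) \<and>
     finite (rules \<Pi>) \<and> nch \<Pi> \<ge> 1 \<and>
     (\<forall>(h, f, bs) \<in> rules \<Pi>. \<forall>\<mu>s. length \<mu>s = length bs \<and> (\<forall>x\<in>set \<mu>s. 0 \<le> x \<and> x \<le> 1)
          \<longrightarrow> 0 \<le> f \<mu>s \<and> f \<mu>s \<le> 1) \<and>
     (\<forall>(h, f, bs) \<in> rules \<Pi>. (\<exists>e s t. h = EAt e s t) \<longrightarrow> bs = [])"

definition ground_atom :: "('x \<Rightarrow> 'c) \<Rightarrow> ('p, 'e, ('x, 'c) trm) atom \<Rightarrow> ('p, 'e, 'c) atom" where
  "ground_atom \<sigma> = map_atom id id (inst \<sigma>)"

definition ground_rule :: "('x \<Rightarrow> 'c) \<Rightarrow> ('p, 'e, ('x, 'c) trm) arule \<Rightarrow> ('p, 'e, 'c) arule" where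
  "ground_rule \<sigma> r = (case r of (h, f, bs) \<Rightarrow> (ground_atom \<sigma> h, f, map (ground_atom \<sigma>) bs))"

definition grounding :: "('p, 'e, 'x, 'c) cgap \<Rightarrow> ('p, 'e, 'c) arule set" where
  "grounding \<Pi> = {ground_rule \<sigma> r | \<sigma> r. r \<in> rules \<Pi>}"

definition prog_S :: "('p, 'e, 'x, 'c) cgap \<Rightarrow> ('c \<Rightarrow> nat) \<Rightarrow> ('p, 'e, 'c) arule set" where
  "prog_S \<Pi> S = grounding \<Pi> \<union>
     {(VAt (cb \<Pi> (S v)) v, (\<lambda>\<mu>s. hd \<mu>s), [VAt (ca \<Pi> (S v)) v]) | v. True}"

definition interp :: "(('p, 'e, 'c) atom \<Rightarrow> real) \<Rightarrow> bool" where
  "interp I \<longleftrightarrow> (\<forall>A. 0 \<le> I A \<and> I A \<le> 1)"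

definition sat_rule :: "(('p, 'e, 'c) atom \<Rightarrow> real) \<Rightarrow> ('p, 'e, 'c) arule \<Rightarrow> bool" where
  "sat_rule I r = (case r of (h, f, bs) \<Rightarrow>
     (\<forall>\<mu>s. length \<mu>s = length bs \<and>
        (\<forall>k < length bs. 0 \<le> \<mu>s ! k \<and> \<mu>s ! k \<le> 1 \<and> \<mu>s ! k \<le> I (bs ! k))
        \<longrightarrow> f \<mu>s \<le> I h))"

definition is_model :: "('p, 'e, 'c) arule set \<Rightarrow> (('p, 'e, 'c) atom \<Rightarrow> real) \<Rightarrow> bool" where
  "is_model P I \<longleftrightarrow> interp I \<and> (\<forall>r \<in> P. sat_rule I r)"

definition MM :: "('p, 'e, 'c) arule set \<Rightarrow> ('p, 'e, 'c) atom \<Rightarrow> real" where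
  "MM P = (THE I. is_model P I \<and> (\<forall>J. is_model P J \<longrightarrow> I \<le> J))"

definition is_state :: "('p, 'e, 'x, 'c) cgap \<Rightarrow> ('c \<Rightarrow> nat) \<Rightarrow> bool" where
  "is_state \<Pi> S \<longleftrightarrow> (\<forall>v. S v \<in> actions \<Pi>)"

definition utility :: "('p, 'e, 'x, 'c) cgap \<Rightarrow> ('c \<Rightarrow> nat) \<Rightarrow> 'c \<Rightarrow> nat \<Rightarrow> real" where
  "utility \<Pi> S v i = MM (prog_S \<Pi> S) (VAt (ca \<Pi> i) v)"

definition dep_graph :: "('p, 'e, 'x, 'c) cgap \<Rightarrow> ('p \<times> 'p) set" where
  "dep_graph \<Pi> =
     {(p2, p1). \<exists>(h, f, bs) \<in> rules \<Pi>. (\<exists>t. h = VAt p1 t) \<and> (\<exists>t. VAt p2 t \<in> set bs)}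
   \<union> {(ca \<Pi> i, cb \<Pi> i) | i. i \<in> actions \<Pi>}"

definition is_vic :: "('p, 'e, 'x, 'c) cgap \<Rightarrow> bool" where
  "is_vic \<Pi> \<longleftrightarrow>
     (\<forall>j \<in> actions \<Pi>. \<forall>(h, f, bs) \<in> rules \<Pi>. \<forall>t. h \<noteq> VAt (cb \<Pi> j) t) \<and>
     (\<forall>i \<in> actions \<Pi>. \<forall>j \<in> actions \<Pi>. i \<noteq> j \<longrightarrow> (cb \<Pi> j, ca \<Pi> i) \<notin> (dep_graph \<Pi>)\<^sup>*)"

end

theory Submission imports Defs begin

definition bounded_prog :: "('p, 'e, 'c) arule set \<Rightarrow> bool" where
  "bounded_prog P \<longleftrightarrow> (\<forall>(h,f,bs)\<in>P. \<forall>\<mu>s. length \<mu>s = length bs \<and> (\<forall>x\<in>set \<mu>s. 0\<le>x \<and> x\<le>1) \<longrightarrow> f \<mu>s \<le> 1)"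

lemma MM_least:
  assumes bnd: "bounded_prog P"
  shows "is_model P (MM P) \<and> (\<forall>J. is_model P J \<longrightarrow> MM P \<le> J)"
proof -
  define L where "L = (\<lambda>A. Inf ((\<lambda>J. J A) ` {J. is_model P J}))"
  have one: "is_model P (\<lambda>_. 1)"
    unfolding is_model_def interp_def sat_rule_def
  proof (intro conjI allI ballI, simp, simp)
    fix r assume r: "r \<in> P"
    obtain h f bs where rr: "r = (h,f,bs)" by (cases r) auto
    have "\<forall>\<mu>s. length \<mu>s = length bs \<and> (\<forall>x\<in>set \<mu>s. 0\<le>x \<and> x\<le>1) \<longrightarrow> f \<mu>s \<le> 1"
      using bnd r rr unfolding bounded_prog_def by auto
    then show "case r of (h, f, bs) \<Rightarrow> \<forall>\<mu>s. length \<mu>s = length bs \<and>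
      (\<forall>k<length bs. 0 \<le> \<mu>s ! k \<and> \<mu>s ! k \<le> 1 \<and> \<mu>s ! k \<le> 1) \<longrightarrow> f \<mu>s \<le> 1"
      unfolding rr
    proof (simp, intro allI impI)
      fix \<mu>s :: "real list" assume h: "\<forall>\<mu>s. length \<mu>s = length bs \<and> (\<forall>x\<in>set \<mu>s. 0\<le>x \<and> x\<le>1) \<longrightarrow> f \<mu>s \<le> 1"
        and a: "length \<mu>s = length bs \<and> (\<forall>k<length bs. 0 \<le> \<mu>s ! k \<and> \<mu>s ! k \<le> 1)"
      then have "\<forall>x\<in>set \<mu>s. 0\<le>x \<and> x\<le>1" by (auto simp: all_set_conv_all_nth)
      then show "f \<mu>s \<le> 1" using h a by blast
    qed
  qed
  have ne: "{J. is_model P J} \<noteq> {}" using one by blast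
  have bdd: "bdd_below ((\<lambda>J. J A) ` {J. is_model P J})" for A
    by (rule bdd_belowI[of _ 0]) (auto simp: is_model_def interp_def)
  have low: "L A \<le> J A" if "is_model P J" for A J
    unfolding L_def by (rule cInf_lower) (use that bdd in auto)
  have grt: "c \<le> L A" if "\<And>J. is_model P J \<Longrightarrow> c \<le> J A" for c A
    unfolding L_def by (rule cInf_greatest) (use that ne in auto)
  have model: "is_model P L"
    unfolding is_model_def
  proof (intro conjI ballI)
    show "interp L" unfolding interp_def
      using grt[of 0] low[OF one] by (auto simp: is_model_def interp_def)
  next
    fix r assume r: "r \<in> P"
    obtain h f bs where rr: "r = (h,f,bs)" by (cases r) auto
    show "sat_rule L r" unfolding rr sat_rule_def
    proof (simp, intro allI impI)
      fix \<mu>s assume a: "length \<mu>s = length bs \<and> (\<forall>k<length bs. 0 \<le> \<mu>s ! k \<and> \<mu>s ! k \<le> 1 \<and> \<mu>s ! k \<le> L (bs ! k))"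
      show "f \<mu>s \<le> L h"
      proof (rule grt)
        fix J assume J: "is_model P J"
        then have "sat_rule J (h,f,bs)" using r rr by (auto simp: is_model_def)
        moreover have "\<forall>k<length bs. \<mu>s ! k \<le> J (bs ! k)"
          using a low[OF J] by (meson order_trans)
        ultimately show "f \<mu>s \<le> J h" using a unfolding sat_rule_def by auto
      qed
    qed
  qed
  have least: "\<forall>J. is_model P J \<longrightarrow> L \<le> J" using low by (auto simp: le_fun_def)
  have "MM P = L" unfolding MM_def
    by (rule the_equality) (use model least in \<open>auto intro: antisym\<close>)
  then show ?thesis using model least by simp
qed

lemma MM_mono:
  assumes "bounded_prog P" "bounded_prog C" "C \<subseteq> P"
  shows "MM C \<le> MM P"
proof -
  have m: "is_model P (MM P)" using MM_least[OF assms(1)] by (rule conjunct1)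
  have "is_model C (MM P)" unfolding is_model_def
    using m assms(3) unfolding is_model_def by (meson subsetD)
  then show ?thesis using MM_least[OF assms(2)] by simp
qed

lemma bounded_subset: "bounded_prog P \<Longrightarrow> C \<subseteq> P \<Longrightarrow> bounded_prog C"
  unfolding bounded_prog_def Ball_def by (meson subsetD)

lemma sat_mono:
  assumes "sat_rule I (h,f,bs)" "\<forall>k<length bs. J (bs!k) \<le> I (bs!k)" "I h \<le> J h"
  shows "sat_rule J (h,f,bs)"
  unfolding sat_rule_def
proof (simp, intro allI impI)
  fix \<mu>s :: "real list"
  assume a: "length \<mu>s = length bs \<and> (\<forall>k<length bs. 0 \<le> \<mu>s ! k \<and> \<mu>s ! k \<le> 1 \<and> \<mu>s ! k \<le> J (bs ! k))"
  then have "\<forall>k<length bs. 0 \<le> \<mu>s ! k \<and> \<mu>s ! k \<le> 1 \<and> \<mu>s ! k \<le> I (bs ! k)"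
    using assms(2) by (meson order_trans)
  then have "f \<mu>s \<le> I h" using assms(1) a unfolding sat_rule_def by auto
  then show "f \<mu>s \<le> J h" using assms(3) by simp
qed

lemma MM_local:
  assumes bP: "bounded_prog P" and CP: "C \<subseteq> P"
    and out: "\<forall>(h,f,bs) \<in> P - C. \<not> U h"
    and closed: "\<forall>(h,f,bs) \<in> P. U h \<longrightarrow> (\<forall>b\<in>set bs. U b)"
    and UA: "U A"
  shows "MM P A = MM C A"
proof -
  have bC: "bounded_prog C" using bounded_subset[OF bP CP] .
  have mP: "is_model P (MM P)" and lP: "\<And>J. is_model P J \<Longrightarrow> MM P \<le> J"
    using MM_least[OF bP] by auto
  have mC: "is_model C (MM C)" using MM_least[OF bC] by (rule conjunct1)
  have le: "MM C \<le> MM P" using MM_mono[OF bP bC CP] .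
  have sP: "\<And>r. r \<in> P \<Longrightarrow> sat_rule (MM P) r" using mP unfolding is_model_def by blast
  have sC: "\<And>r. r \<in> C \<Longrightarrow> sat_rule (MM C) r" using mC unfolding is_model_def by blast
  have iP: "interp (MM P)" using mP unfolding is_model_def by blast
  have iC: "interp (MM C)" using mC unfolding is_model_def by blast
  define J where "J = (\<lambda>A. if U A then MM C A else MM P A)"
  have "is_model P J" unfolding is_model_def
  proof (intro conjI ballI)
    show "interp J" using iP iC unfolding J_def interp_def by simp
  next
    fix r assume r: "r \<in> P"
    obtain h f bs where rr: "r = (h,f,bs)" by (cases r) auto
    show "sat_rule J r"
    proof (cases "U h")
      case True
      then have rC: "r \<in> C" using out r rr by blast
      then have s: "sat_rule (MM C) (h,f,bs)" using sC rr by simp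
      have "\<forall>b\<in>set bs. U b" using closed r rr True by blast
      then have "\<forall>k<length bs. J (bs!k) \<le> MM C (bs!k)" unfolding J_def
        using nth_mem by fastforce
      moreover have "MM C h \<le> J h" unfolding J_def using True by simp
      ultimately show ?thesis unfolding rr using sat_mono[OF s] by blast
    next
      case False
      have s: "sat_rule (MM P) (h,f,bs)" using sP r rr by simp
      have "\<forall>k<length bs. J (bs!k) \<le> MM P (bs!k)" unfolding J_def
        using le unfolding le_fun_def by simp
      moreover have "MM P h \<le> J h" unfolding J_def using False by simp
      ultimately show ?thesis unfolding rr using sat_mono[OF s] by blast
    qed
  qed
  then have "MM P \<le> J" by (rule lP)
  then have "MM P A \<le> MM C A" using UA unfolding le_fun_def J_def by (metis)
  moreover have "MM C A \<le> MM P A" using le unfolding le_fun_def by blast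
  ultimately show ?thesis by simp
qed


definition vcr :: "('p, 'e, 'x, 'c) cgap \<Rightarrow> ('c \<Rightarrow> nat) \<Rightarrow> 'c \<Rightarrow> ('p, 'e, 'c) arule" where
  "vcr \<Pi> S v = (VAt (cb \<Pi> (S v)) v, (\<lambda>\<mu>s. hd \<mu>s), [VAt (ca \<Pi> (S v)) v])"

lemma prog_S_eq: "prog_S \<Pi> S = grounding \<Pi> \<union> range (vcr \<Pi> S)"
  unfolding prog_S_def vcr_def by blast

lemma ground_atom_V: "ground_atom \<sigma> (VAt q t) = VAt q (inst \<sigma> t)"
  by (simp add: ground_atom_def)
lemma ground_atom_E: "ground_atom \<sigma> (EAt e s t) = EAt e (inst \<sigma> s) (inst \<sigma> t)"
  by (simp add: ground_atom_def)

lemma grounding_cases: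
  assumes "(h,f,bs) \<in> grounding \<Pi>"
  obtains \<sigma> h0 bs0 where "(h0,f,bs0) \<in> rules \<Pi>" "h = ground_atom \<sigma> h0" "bs = map (ground_atom \<sigma>) bs0"
  using assms unfolding grounding_def ground_rule_def by (auto split: prod.splits)

lemma bounded_prog_S:
  assumes "is_cgap \<Pi>" shows "bounded_prog (prog_S \<Pi> S)"
  unfolding bounded_prog_def
proof (intro ballI)
  fix r assume r: "r \<in> prog_S \<Pi> S"
  obtain h f bs where rr: "r = (h,f,bs)" by (cases r) auto
  have "\<forall>\<mu>s. length \<mu>s = length bs \<and> (\<forall>x\<in>set \<mu>s. 0\<le>x \<and> x\<le>1) \<longrightarrow> f \<mu>s \<le> 1"
  proof (cases "r \<in> grounding \<Pi>")
    case True
    then obtain \<sigma> h0 bs0 where r0: "(h0,f,bs0) \<in> rules \<Pi>" "bs = map (ground_atom \<sigma>) bs0"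
      using rr grounding_cases by metis
    have "\<forall>\<mu>s. length \<mu>s = length bs0 \<and> (\<forall>x\<in>set \<mu>s. 0 \<le> x \<and> x \<le> 1) \<longrightarrow> 0 \<le> f \<mu>s \<and> f \<mu>s \<le> 1"
      using assms r0(1) unfolding is_cgap_def by fast
    then show ?thesis using r0(2) by simp
  next
    case False
    then obtain v where "r = vcr \<Pi> S v" using r prog_S_eq by blast
    then have "f = (\<lambda>\<mu>s. hd \<mu>s)" "length bs = 1" using rr by (auto simp: vcr_def)
    then show ?thesis by (auto simp: length_Suc_conv)
  qed
  then show "case r of (h,f,bs) \<Rightarrow> \<forall>\<mu>s. length \<mu>s = length bs \<and> (\<forall>x\<in>set \<mu>s. 0\<le>x \<and> x\<le>1) \<longrightarrow> f \<mu>s \<le> 1"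
    using rr by simp
qed

definition UU :: "('p, 'e, 'x, 'c) cgap \<Rightarrow> nat \<Rightarrow> ('p, 'e, 'c) atom \<Rightarrow> bool" where
  "UU \<Pi> k A \<longleftrightarrow> (\<forall>q v. A = VAt q v \<longrightarrow> (cb \<Pi> k, q) \<notin> (dep_graph \<Pi>)\<^sup>*)"

lemma closed_S:
  assumes cg: "is_cgap \<Pi>" and st: "is_state \<Pi> S"
  shows "\<forall>(h,f,bs) \<in> prog_S \<Pi> S. UU \<Pi> k h \<longrightarrow> (\<forall>b\<in>set bs. UU \<Pi> k b)"
proof (intro ballI)
  fix r assume r: "r \<in> prog_S \<Pi> S"
  obtain h f bs where rr: "r = (h,f,bs)" by (cases r) auto
  have main: "UU \<Pi> k b" if Uh: "UU \<Pi> k h" and b: "b \<in> set bs" for b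
  proof (cases "r \<in> grounding \<Pi>")
    case True
    then obtain \<sigma> h0 bs0 where r0: "(h0,f,bs0) \<in> rules \<Pi>" "h = ground_atom \<sigma> h0" "bs = map (ground_atom \<sigma>) bs0"
      using rr grounding_cases by metis
    obtain b0 where b0: "b0 \<in> set bs0" "b = ground_atom \<sigma> b0" using b r0(3) by auto
    show ?thesis
    proof (cases h0)
      case (VAt q t)
      show ?thesis
      proof (cases b0)
        case (VAt q' t')
        have edge: "(q', q) \<in> dep_graph \<Pi>"
          unfolding dep_graph_def using r0(1) b0(1) \<open>h0 = VAt q t\<close> VAt by fast
        have "(cb \<Pi> k, q) \<notin> (dep_graph \<Pi>)\<^sup>*" using Uh r0(2) \<open>h0 = VAt q t\<close>
          by (simp add: UU_def ground_atom_V)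
        then have "(cb \<Pi> k, q') \<notin> (dep_graph \<Pi>)\<^sup>*" using edge rtrancl_into_rtrancl by metis
        then show ?thesis using b0(2) VAt by (simp add: UU_def ground_atom_V)
      next
        case (EAt e s t)
        then show ?thesis using b0(2) by (simp add: UU_def ground_atom_E)
      qed
    next
      case (EAt e s t)
      then have "bs0 = []" using cg r0(1) unfolding is_cgap_def by fast
      then show ?thesis using b0 by simp
    qed
  next
    case False
    then obtain v where "r = vcr \<Pi> S v" using r prog_S_eq by blast
    then have hb: "h = VAt (cb \<Pi> (S v)) v" "bs = [VAt (ca \<Pi> (S v)) v]" using rr by (auto simp: vcr_def)
    have edge: "(ca \<Pi> (S v), cb \<Pi> (S v)) \<in> dep_graph \<Pi>"
      using st unfolding dep_graph_def is_state_def by blast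
    have "(cb \<Pi> k, cb \<Pi> (S v)) \<notin> (dep_graph \<Pi>)\<^sup>*" using Uh hb by (simp add: UU_def)
    then have "(cb \<Pi> k, ca \<Pi> (S v)) \<notin> (dep_graph \<Pi>)\<^sup>*" using edge rtrancl_into_rtrancl by metis
    then show ?thesis using b hb by (simp add: UU_def)
  qed
  then show "case r of (h,f,bs) \<Rightarrow> UU \<Pi> k h \<longrightarrow> (\<forall>b\<in>set bs. UU \<Pi> k b)" using rr by simp
qed


lemma local_S:
  assumes cg: "is_cgap \<Pi>" and st: "is_state \<Pi> S"
    and C: "C \<subseteq> prog_S \<Pi> S" "prog_S \<Pi> S \<subseteq> C \<union> {vcr \<Pi> S p}"
    and U: "UU \<Pi> (S p) A"
  shows "MM (prog_S \<Pi> S) A = MM C A"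
proof (rule MM_local[where U="UU \<Pi> (S p)"])
  show "bounded_prog (prog_S \<Pi> S)" using bounded_prog_S[OF cg] .
  show "C \<subseteq> prog_S \<Pi> S" by fact
  show "\<forall>(h,f,bs) \<in> prog_S \<Pi> S - C. \<not> UU \<Pi> (S p) h"
  proof (intro ballI)
    fix r assume "r \<in> prog_S \<Pi> S - C"
    then have "r = vcr \<Pi> S p" using C by blast
    then show "case r of (h,f,bs) \<Rightarrow> \<not> UU \<Pi> (S p) h" by (simp add: vcr_def UU_def)
  qed
  show "\<forall>(h,f,bs) \<in> prog_S \<Pi> S. UU \<Pi> (S p) h \<longrightarrow> (\<forall>b\<in>set bs. UU \<Pi> (S p) b)"
    using closed_S[OF cg st] .
  show "UU \<Pi> (S p) A" by fact
qed

theorem mainTheorem9: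
  fixes \<Pi> :: "('p, 'e, 'x, 'c) cgap" and S1 S2 :: "'c \<Rightarrow> nat" and p :: 'c
  assumes "is_cgap \<Pi>" and "is_vic \<Pi>"
    and "is_state \<Pi> S1" and "is_state \<Pi> S2"
    and "\<forall>p'. p' \<noteq> p \<longrightarrow> S1 p' = S2 p'" and "S1 p \<noteq> S2 p"
  shows "\<forall>ph. utility \<Pi> S1 ph (S1 p) \<ge> utility \<Pi> S2 ph (S1 p)
            \<and> utility \<Pi> S1 ph (S2 p) \<le> utility \<Pi> S2 ph (S2 p)
            \<and> (\<forall>j \<in> actions \<Pi> - {S1 p, S2 p}. utility \<Pi> S1 ph j = utility \<Pi> S2 ph j)"
proof
  fix ph
  note cg = assms(1)
  define C where "C = grounding \<Pi> \<union> vcr \<Pi> S1 ` {v. v \<noteq> p}"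
  have eqv: "vcr \<Pi> S1 v = vcr \<Pi> S2 v" if "v \<noteq> p" for v
    using assms(5) that by (simp add: vcr_def)
  have C1: "C \<subseteq> prog_S \<Pi> S1" "prog_S \<Pi> S1 \<subseteq> C \<union> {vcr \<Pi> S1 p}"
    unfolding C_def prog_S_eq by auto
  have C2a: "C \<subseteq> prog_S \<Pi> S2"
  proof
    fix r assume "r \<in> C"
    then show "r \<in> prog_S \<Pi> S2" unfolding C_def prog_S_eq using eqv by force
  qed
  have C2b: "prog_S \<Pi> S2 \<subseteq> C \<union> {vcr \<Pi> S2 p}"
  proof
    fix r assume r: "r \<in> prog_S \<Pi> S2"
    show "r \<in> C \<union> {vcr \<Pi> S2 p}"
    proof (cases "r \<in> grounding \<Pi>")
      case True then show ?thesis unfolding C_def by blast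
    next
      case False
      then obtain v where v: "r = vcr \<Pi> S2 v" using r prog_S_eq by blast
      show ?thesis
      proof (cases "v = p")
        case True then show ?thesis using v by simp
      next
        case False
        then have "r = vcr \<Pi> S1 v" using v eqv by simp
        then show ?thesis unfolding C_def using False by blast
      qed
    qed
  qed
  note C2 = C2a C2b
  have bC: "bounded_prog C" using bounded_subset[OF bounded_prog_S[OF cg] C1(1)] .
  have m1: "MM C \<le> MM (prog_S \<Pi> S1)" using MM_mono[OF bounded_prog_S[OF cg] bC C1(1)] .
  have m2: "MM C \<le> MM (prog_S \<Pi> S2)" using MM_mono[OF bounded_prog_S[OF cg] bC C2(1)] .
  have vic: "\<And>i j. i \<in> actions \<Pi> \<Longrightarrow> j \<in> actions \<Pi> \<Longrightarrow> i \<noteq> j \<Longrightarrow> (cb \<Pi> j, ca \<Pi> i) \<notin> (dep_graph \<Pi>)\<^sup>*"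
    using assms(2) unfolding is_vic_def by blast
  have a1: "S1 p \<in> actions \<Pi>" and a2: "S2 p \<in> actions \<Pi>"
    using assms(3,4) unfolding is_state_def by auto
  have U1: "UU \<Pi> (S1 p) (VAt (ca \<Pi> j) ph)" if "j \<in> actions \<Pi>" "j \<noteq> S1 p" for j
    using vic[OF that(1) a1 that(2)] by (simp add: UU_def)
  have U2: "UU \<Pi> (S2 p) (VAt (ca \<Pi> j) ph)" if "j \<in> actions \<Pi>" "j \<noteq> S2 p" for j
    using vic[OF that(1) a2 that(2)] by (simp add: UU_def)
  have E1: "MM (prog_S \<Pi> S1) (VAt (ca \<Pi> j) ph) = MM C (VAt (ca \<Pi> j) ph)"
    if "j \<in> actions \<Pi>" "j \<noteq> S1 p" for j
    using local_S[OF cg assms(3) C1 U1[OF that]] .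
  have E2: "MM (prog_S \<Pi> S2) (VAt (ca \<Pi> j) ph) = MM C (VAt (ca \<Pi> j) ph)"
    if "j \<in> actions \<Pi>" "j \<noteq> S2 p" for j
    using local_S[OF cg assms(4) C2 U2[OF that]] .
  have "utility \<Pi> S2 ph (S1 p) \<le> utility \<Pi> S1 ph (S1 p)"
    unfolding utility_def using E2[OF a1 assms(6)] m1 unfolding le_fun_def by simp
  moreover have "utility \<Pi> S1 ph (S2 p) \<le> utility \<Pi> S2 ph (S2 p)"
    unfolding utility_def using E1[OF a2 assms(6)[symmetric]] m2 unfolding le_fun_def by simp
  moreover have "\<forall>j \<in> actions \<Pi> - {S1 p, S2 p}. utility \<Pi> S1 ph j = utility \<Pi> S2 ph j"
    unfolding utility_def using E1 E2 by simp
  ultimately show "utility \<Pi> S1 ph (S1 p) \<ge> utility \<Pi> S2 ph (S1 p)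
            \<and> utility \<Pi> S1 ph (S2 p) \<le> utility \<Pi> S2 ph (S2 p)
            \<and> (\<forall>j \<in> actions \<Pi> - {S1 p, S2 p}. utility \<Pi> S1 ph j = utility \<Pi> S2 ph j)" by simp
qed

end
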